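(* Let $\varphi,\psi$ be independent random variables uniform on $[0,\pi]$, and set $(\alpha,\beta)=(\varphi,\psi)$ if $\varphi+\psi<\pi$ and $(\alpha,\beta)=(\pi-\psi,\pi-\varphi)$ if $\varphi+\psi>\pi$. Let $T$ be the triangle with vertices $A=(0,0)$, $B=(1,0)$ and \[ C=\left(\frac{\tan\beta}{\tan\alpha+\tan\beta},\frac{\tan\alpha\tan\beta}{\tan\alpha+\tan\beta}\right), \] so that $T$ has interior angles $\alpha$ at $A$ and $\beta$ at $B$. Let $a=\|B-C\|$ and $b=\|A-C\|$. Then the joint density of $(a,b)$ is \[ k(x,y)=\begin{cases}\dfrac{2}{\pi^2 x y} & \text{if } |1-x|<y<1+x \text{ and } x>0,\\ 0 & \text{otherwise,}\end{cases} \] and $a$ has marginal density $\dfrac{2}{\pi^2}\dfrac{\ln(1+x)-\ln|1-x|}{x}$ for $x>0$.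
   Context: $\|\cdot\|$ is the Euclidean norm. $T$ is called a uniform triangle. *)

theory Defs
  imports "HOL-Probability.Probability"
begin

text \<open>Angles of the uniform triangle obtained from the two uniform angles phi, psi.
  The boundary case phi + psi = pi (a null event) is put in the second branch.\<close>
definition tri_angles :: "real \<Rightarrow> real \<Rightarrow> real \<times> real" where
  "tri_angles \<phi> \<psi> = (if \<phi> + \<psi> < pi then (\<phi>, \<psi>) else (pi - \<psi>, pi - \<phi>))"

definition tri_C :: "real \<Rightarrow> real \<Rightarrow> real \<times> real" where
  "tri_C \<alpha> \<beta> = (tan \<beta> / (tan \<alpha> + tan \<beta>), tan \<alpha> * tan \<beta> / (tan \<alpha> + tan \<beta>))"

definition side_a :: "real \<Rightarrow> real \<Rightarrow> real" where
  "side_a \<phi> \<psi> = dist ((1::real), (0::real)) (tri_C (fst (tri_angles \<phi> \<psi>)) (snd (tri_angles \<phi> \<psi>)))"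

definition side_b :: "real \<Rightarrow> real \<Rightarrow> real" where
  "side_b \<phi> \<psi> = dist ((0::real), (0::real)) (tri_C (fst (tri_angles \<phi> \<psi>)) (snd (tri_angles \<phi> \<psi>)))"

definition joint_density :: "real \<Rightarrow> real \<Rightarrow> real" where
  "joint_density x y = (if x > 0 \<and> \<bar>1 - x\<bar> < y \<and> y < 1 + x then 2 / (pi\<^sup>2 * x * y) else 0)"

definition marginal_density_a :: "real \<Rightarrow> real" where
  "marginal_density_a x = (if x > 0 then 2 / pi\<^sup>2 * ((ln (1 + x) - ln \<bar>1 - x\<bar>) / x) else 0)"

end

theory Submission
  imports Defs
begin


lemma tan_meas[measurable]: "(tan::real\<Rightarrow>real) \<in> borel_measurable borel"
proof -
  have "(\<lambda>x. sin x / cos x :: real) \<in> borel_measurable borel"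
    by (rule borel_measurable_divide) (simp_all add: borel_measurable_sin borel_measurable_cos)
  moreover have "tan = (\<lambda>x::real. sin x / cos x)" by (rule ext) (simp add: tan_def)
  ultimately show ?thesis by simp
qed


lemma SUP_mult_indicator_incseq:
  fixes h :: ennreal
  assumes "incseq A"
  shows "(SUP i. h * indicator (A i) x) = h * indicator (\<Union>i. A i) x"
proof (cases "x \<in> (\<Union>i. A i)")
  case True
  then obtain n where n: "x \<in> A n" by auto
  have "(SUP i. h * indicator (A i) x) = h"
  proof (rule antisym)
    show "(SUP i. h * indicator (A i) x) \<le> h"
      by (rule SUP_least) (auto simp: indicator_def)
    show "h \<le> (SUP i. h * indicator (A i) x)"
      using n by (intro SUP_upper2[of n]) auto
  qed
  with True show ?thesis by simp
next
  case False
  then show ?thesis by (simp add: indicator_def)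
qed

lemma subst_open:
  fixes f :: "real \<Rightarrow> ennreal" and g g' :: "real \<Rightarrow> real"
  assumes Mf[measurable]: "f \<in> borel_measurable borel"
    and cd: "c < d"
    and derivg: "\<And>x. c < x \<Longrightarrow> x < d \<Longrightarrow> (g has_real_derivative g' x) (at x)"
    and contg': "continuous_on {c<..<d} g'"
    and g'_nonneg: "\<And>x. c < x \<Longrightarrow> x < d \<Longrightarrow> g' x \<ge> 0"
  shows "(\<integral>\<^sup>+x. f (g x) * ennreal (g' x) * indicator {c<..<d} x \<partial>lborel)
       = (\<integral>\<^sup>+y. f y * indicator (g ` {c<..<d}) y \<partial>lborel)"
proof -
  define a where "a n = c + (d-c)/(real n + 3)" for n::nat
  define b where "b n = d - (d-c)/(real n + 3)" for n::nat
  have pos: "0 < (d-c)/(real n + 3)" for n using cd by simp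
  have lt: "2 * ((d-c)/(real n + 3)) < d - c" for n
  proof -
    have "2 * ((d-c)/(real n + 3)) = (d-c) * (2 / (real n + 3))" by simp
    also have "\<dots> < (d-c) * 1" using cd by (intro mult_strict_left_mono) auto
    finally show ?thesis by simp
  qed
  have ab: "c < a n" "a n < b n" "b n < d" for n
    using pos[of n] lt[of n] unfolding a_def b_def by auto
  have dec: "(d-c)/(real (Suc n) + 3) \<le> (d-c)/(real n + 3)" for n
    using cd by (intro divide_left_mono) auto
  have inc: "incseq (\<lambda>n. {a n..b n})"
    by (rule incseq_SucI) (use dec in \<open>auto simp: a_def b_def\<close>)
  have U: "(\<Union>n. {a n..b n}) = {c<..<d}"
  proof
    show "(\<Union>n. {a n..b n}) \<subseteq> {c<..<d}"
    proof (rule UN_least)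
      fix n show "{a n..b n} \<subseteq> {c<..<d}" using ab[of n] by auto
    qed
    show "{c<..<d} \<subseteq> (\<Union>n. {a n..b n})"
    proof
      fix x assume x: "x \<in> {c<..<d}"
      define e where "e = min (x - c) (d - x)"
      have e: "e > 0" using x by (auto simp: e_def)
      obtain n :: nat where n: "(d-c)/e < real n" using reals_Archimedean2 by blast
      then have "d - c < real n * e" using e by (simp add: field_simps)
      also have "\<dots> < (real n + 3) * e" using e by (intro mult_strict_right_mono) auto
      finally have "(d-c)/(real n + 3) < e" by (simp add: field_simps)
      then have "x \<in> {a n..b n}" unfolding a_def b_def e_def by auto
      then show "x \<in> (\<Union>n. {a n..b n})" by blast
    qed
  qed
  have contg: "continuous_on {c<..<d} g"
    by (rule has_real_derivative_imp_continuous_on) (use derivg in auto)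
  have img: "g ` {a n..b n} = {g (a n)..g (b n)}" for n
  proof
    have mono: "g x \<le> g y" if "a n \<le> x" "x \<le> y" "y \<le> b n" for x y
      using that ab[of n]
      by (intro deriv_nonneg_imp_mono[of x y g g']) (auto intro!: derivg g'_nonneg)
    show "g ` {a n..b n} \<subseteq> {g (a n)..g (b n)}" using mono by auto
    have cn: "continuous_on {a n..b n} g"
      by (rule continuous_on_subset[OF contg]) (use ab[of n] in auto)
    show "{g (a n)..g (b n)} \<subseteq> g ` {a n..b n}"
    proof
      fix y assume "y \<in> {g (a n)..g (b n)}"
      then obtain x where "a n \<le> x" "x \<le> b n" "g x = y"
        using IVT'[of g "a n" y "b n"] cn ab[of n] by auto
      then show "y \<in> g ` {a n..b n}" by auto
    qed
  qed
  have imgU: "g ` {c<..<d} = (\<Union>n. {g (a n)..g (b n)})"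
    by (simp add: U[symmetric] image_UN img)
  have inc2: "incseq (\<lambda>n. {g (a n)..g (b n)})"
    unfolding img[symmetric] incseq_def
  proof (intro allI impI)
    fix m n :: nat assume "m \<le> n"
    then have "{a m..b m} \<subseteq> {a n..b n}" using inc by (simp add: incseq_def)
    then show "g ` {a m..b m} \<le> g ` {a n..b n}" by (rule image_mono)
  qed
  define G where "G x = (if x \<in> {c<..<d} then g x else 0)" for x
  define G' where "G' x = (if x \<in> {c<..<d} then g' x else 0)" for x
  have MG[measurable]: "G \<in> borel_measurable borel" unfolding G_def
    by (intro borel_measurable_continuous_on_if contg) auto
  have MG'[measurable]: "G' \<in> borel_measurable borel" unfolding G'_def
    by (intro borel_measurable_continuous_on_if contg') auto
  have eqG: "f (g x) * ennreal (g' x) * indicator S x = f (G x) * ennreal (G' x) * indicator S x"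
    if "S \<subseteq> {c<..<d}" for x S
    using that by (auto simp: G_def G'_def indicator_def)
  have step: "(\<integral>\<^sup>+y. f y * indicator {g (a n)..g (b n)} y \<partial>lborel)
      = (\<integral>\<^sup>+x. f (g x) * ennreal (g' x) * indicator {a n..b n} x \<partial>lborel)" for n
    using ab[of n]
    by (intro nn_integral_substitution_aux Mf)
       (auto intro!: derivg g'_nonneg continuous_on_subset[OF contg'])
  have "(\<integral>\<^sup>+x. f (g x) * ennreal (g' x) * indicator {c<..<d} x \<partial>lborel)
      = (\<integral>\<^sup>+x. (SUP n. f (G x) * ennreal (G' x) * indicator {a n..b n} x) \<partial>lborel)"
    by (subst SUP_mult_indicator_incseq[OF inc]) (simp add: U eqG)
  also have "\<dots> = (SUP n. \<integral>\<^sup>+x. f (G x) * ennreal (G' x) * indicator {a n..b n} x \<partial>lborel)"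
  proof (rule nn_integral_monotone_convergence_SUP)
    show "incseq (\<lambda>n x. f (G x) * ennreal (G' x) * indicator {a n..b n} x)"
      unfolding incseq_def le_fun_def
    proof (intro allI impI)
      fix m n :: nat and x assume "m \<le> n"
      then have sub: "{a m..b m} \<subseteq> {a n..b n}" using inc by (simp add: incseq_def)
      show "f (G x) * ennreal (G' x) * indicator {a m..b m} x \<le> f (G x) * ennreal (G' x) * indicator {a n..b n} x"
        using sub by (intro mult_left_mono) (auto simp: indicator_def)
    qed
  qed measurable
  also have "\<dots> = (SUP n. \<integral>\<^sup>+y. f y * indicator {g (a n)..g (b n)} y \<partial>lborel)"
  proof (rule SUP_cong[OF refl])
    fix n
    have sub: "{a n..b n} \<subseteq> {c<..<d}" using ab[of n] by auto
    show "(\<integral>\<^sup>+x. f (G x) * ennreal (G' x) * indicator {a n..b n} x \<partial>lborel)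
      = (\<integral>\<^sup>+y. f y * indicator {g (a n)..g (b n)} y \<partial>lborel)"
      using eqG[OF sub] step[of n] by simp
  qed
  also have "\<dots> = (\<integral>\<^sup>+y. (SUP n. f y * indicator {g (a n)..g (b n)} y) \<partial>lborel)"
  proof (rule nn_integral_monotone_convergence_SUP[symmetric])
    show "incseq (\<lambda>n y. f y * indicator {g (a n)..g (b n)} y)"
      unfolding incseq_def le_fun_def
    proof (intro allI impI)
      fix m n :: nat and x assume "m \<le> n"
      then have sub: "{g (a m)..g (b m)} \<subseteq> {g (a n)..g (b n)}" using inc2 by (simp add: incseq_def)
      show "f x * indicator {g (a m)..g (b m)} x \<le> f x * indicator {g (a n)..g (b n)} x"
        using sub by (intro mult_left_mono) (auto simp: indicator_def)
    qed
  qed measurable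
  also have "\<dots> = (\<integral>\<^sup>+y. f y * indicator (g ` {c<..<d}) y \<partial>lborel)"
    by (simp add: SUP_mult_indicator_incseq[OF inc2] imgU)
  finally show ?thesis .
qed



lemma trig_id1:
  fixes \<alpha> \<beta> :: real
  shows "sin (\<alpha>+\<beta>) - sin \<beta> * cos \<alpha> = sin \<alpha> * cos \<beta>"
  by (simp add: sin_add)

lemma trig_id2:
  fixes \<alpha> \<beta> :: real
  shows "(sin (\<alpha>+\<beta>))\<^sup>2 + (sin \<beta>)\<^sup>2 - 2 * sin \<beta> * sin (\<alpha>+\<beta>) * cos \<alpha> = (sin \<alpha>)\<^sup>2"
proof -
  have "(sin (\<alpha>+\<beta>))\<^sup>2 + (sin \<beta>)\<^sup>2 - 2 * sin \<beta> * sin (\<alpha>+\<beta>) * cos \<alpha>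
      = (sin (\<alpha>+\<beta>) - sin \<beta> * cos \<alpha>)\<^sup>2 + (sin \<beta>)\<^sup>2 * (1 - (cos \<alpha>)\<^sup>2)"
    by (simp add: power2_eq_square algebra_simps)
  also have "\<dots> = (sin \<alpha> * cos \<beta>)\<^sup>2 + (sin \<beta>)\<^sup>2 * (sin \<alpha>)\<^sup>2"
    by (simp only: trig_id1 sin_squared_eq)
  also have "\<dots> = (sin \<alpha>)\<^sup>2"
    by (simp add: power_mult_distrib cos_squared_eq algebra_simps)
  finally show ?thesis .
qed

lemma sq_helper:
  fixes p q r s :: real
  assumes "q\<^sup>2 + r\<^sup>2 = 1"
  shows "(p*q/s)\<^sup>2 + (p*r/s)\<^sup>2 = (p/s)\<^sup>2"
proof -
  have "(p*q/s)\<^sup>2 + (p*r/s)\<^sup>2 = (p/s)\<^sup>2 * (q\<^sup>2 + r\<^sup>2)"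
    by (simp add: power_divide power_mult_distrib algebra_simps add_divide_distrib)
  then show ?thesis using assms by simp
qed

definition Gt :: "real \<Rightarrow> real \<Rightarrow> real \<times> real" where
  "Gt \<alpha> \<beta> = (dist ((1::real), (0::real)) (tri_C \<alpha> \<beta>), dist ((0::real), (0::real)) (tri_C \<alpha> \<beta>))"

lemma Gt_eq:
  fixes \<alpha> \<beta> :: real
  assumes "0 < \<alpha>" "0 < \<beta>" "\<alpha> + \<beta> < pi" "cos \<alpha> \<noteq> 0" "cos \<beta> \<noteq> 0"
  shows "Gt \<alpha> \<beta> = (sin \<alpha> / sin (\<alpha>+\<beta>), sin \<beta> / sin (\<alpha>+\<beta>))"
proof -
  define s where "s = sin (\<alpha>+\<beta>)"
  have s: "s > 0" unfolding s_def using assms by (intro sin_gt_zero) auto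
  have sa: "sin \<alpha> > 0" using assms by (intro sin_gt_zero) auto
  have sb: "sin \<beta> > 0" using assms by (intro sin_gt_zero) auto
  have tsum: "tan \<alpha> + tan \<beta> = s / (cos \<alpha> * cos \<beta>)"
    unfolding s_def using assms by (simp add: add_tan_eq)
  have cx: "fst (tri_C \<alpha> \<beta>) = sin \<beta> * cos \<alpha> / s"
    unfolding tri_C_def using assms s by (simp add: tsum tan_def field_simps s_def sin_add)
  have cy: "snd (tri_C \<alpha> \<beta>) = sin \<alpha> * sin \<beta> / s"
    unfolding tri_C_def using assms s by (simp add: tsum tan_def field_simps s_def sin_add)
  have one: "1 - sin \<beta> * cos \<alpha> / s = sin \<alpha> * cos \<beta> / s"
    using s trig_id1[of \<alpha> \<beta>] by (simp add: s_def field_simps)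
  have d1: "dist ((1::real), (0::real)) (tri_C \<alpha> \<beta>) = sin \<alpha> / s"
  proof -
    have "dist ((1::real), (0::real)) (tri_C \<alpha> \<beta>) = sqrt ((sin \<alpha> * cos \<beta> / s)\<^sup>2 + (sin \<alpha> * sin \<beta> / s)\<^sup>2)"
      by (subst prod.collapse[symmetric, of "tri_C \<alpha> \<beta>"], simp only: dist_Pair_Pair cx cy)
         (simp add: dist_real_def one[symmetric] power2_commute power_divide power2_abs)
    also have "(sin \<alpha> * cos \<beta> / s)\<^sup>2 + (sin \<alpha> * sin \<beta> / s)\<^sup>2 = (sin \<alpha> / s)\<^sup>2"
      by (rule sq_helper) simp
    finally show ?thesis using sa s by simp
  qed
  have d2: "dist ((0::real), (0::real)) (tri_C \<alpha> \<beta>) = sin \<beta> / s"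
  proof -
    have "dist ((0::real), (0::real)) (tri_C \<alpha> \<beta>) = sqrt ((sin \<beta> * cos \<alpha> / s)\<^sup>2 + (sin \<alpha> * sin \<beta> / s)\<^sup>2)"
      by (subst prod.collapse[symmetric, of "tri_C \<alpha> \<beta>"], simp only: dist_Pair_Pair cx cy)
         (simp add: dist_real_def power2_commute power_divide power2_abs)
    also have "(sin \<beta> * cos \<alpha> / s)\<^sup>2 + (sin \<alpha> * sin \<beta> / s)\<^sup>2 = (sin \<beta> / s)\<^sup>2"
      using sq_helper[of "cos \<alpha>" "sin \<alpha>" "sin \<beta>" s] by (simp add: mult.commute)
    finally show ?thesis using sb s by simp
  qed
  show ?thesis unfolding Gt_def d1 d2 s_def ..
qed



lemma g1_deriv:
  fixes \<alpha> \<beta> :: real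
  assumes "sin (\<alpha> + \<beta>) \<noteq> 0"
  shows "((\<lambda>t. sin t / sin (\<alpha> + t)) has_real_derivative sin \<alpha> / (sin (\<alpha> + \<beta>))\<^sup>2) (at \<beta>)"
proof -
  have e: "cos \<beta> * sin (\<alpha> + \<beta>) - sin \<beta> * cos (\<alpha> + \<beta>) = sin \<alpha>"
    using sin_diff[of "\<alpha>+\<beta>" \<beta>] by (simp add: algebra_simps)
  show ?thesis
    using assms
    by (auto intro!: derivative_eq_intros simp: e power2_eq_square)
qed

lemma g1_image:
  fixes \<alpha> :: real
  assumes "0 < \<alpha>" "\<alpha> < pi"
  shows "(\<lambda>t. sin t / sin (\<alpha> + t)) ` {0<..<pi - \<alpha>} = {0<..}"
proof
  show "(\<lambda>t. sin t / sin (\<alpha> + t)) ` {0<..<pi - \<alpha>} \<subseteq> {0<..}"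
  proof
    fix y assume "y \<in> (\<lambda>t. sin t / sin (\<alpha> + t)) ` {0<..<pi - \<alpha>}"
    then obtain t where t: "0 < t" "t < pi - \<alpha>" "y = sin t / sin (\<alpha> + t)" by auto
    have "sin t > 0" "sin (\<alpha> + t) > 0" using t assms by (auto intro!: sin_gt_zero)
    then show "y \<in> {0<..}" using t by simp
  qed
  show "{0<..} \<subseteq> (\<lambda>t. sin t / sin (\<alpha> + t)) ` {0<..<pi - \<alpha>}"
  proof
    fix b :: real assume "b \<in> {0<..}"
    then have b: "b > 0" by simp
    have sa: "sin \<alpha> > 0" using assms by (intro sin_gt_zero) auto
    define q where "q = (1 - b * cos \<alpha>) / (b * sin \<alpha>)"
    define t where "t = pi/2 - arctan q"
    have t0: "0 < t" "t < pi" unfolding t_def using arctan_bounded[of q] by auto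
    have r0: "1 + q\<^sup>2 > 0" by (smt (verit) zero_le_power2)
    then have r: "sqrt (1 + q\<^sup>2) > 0" by simp
    have st: "sin t = 1 / sqrt (1 + q\<^sup>2)" unfolding t_def by (simp add: sin_diff cos_arctan)
    have ct: "cos t = q / sqrt (1 + q\<^sup>2)" unfolding t_def by (simp add: cos_diff sin_arctan)
    have "sin (\<alpha> + t) = (sin \<alpha> * q + cos \<alpha>) / sqrt (1 + q\<^sup>2)"
      by (simp add: sin_add st ct add_divide_distrib)
    also have "sin \<alpha> * q + cos \<alpha> = 1 / b"
      unfolding q_def using b sa by (simp add: field_simps)
    finally have sat: "sin (\<alpha> + t) = 1 / (b * sqrt (1 + q\<^sup>2))" by simp
    have val: "sin t / sin (\<alpha> + t) = b" using b r by (simp add: st sat)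
    have "sin (\<alpha> + t) > 0" using sat b r by simp
    then have "\<alpha> + t < pi"
      using t0 assms sin_ge_zero[of "\<alpha>+t - pi"] 
      by (smt (verit) sin_periodic_pi2 sin_pi_minus sin_minus)
    with t0 val show "b \<in> (\<lambda>t. sin t / sin (\<alpha> + t)) ` {0<..<pi - \<alpha>}"
      by (intro image_eqI[of _ _ t]) auto
  qed
qed



definition Aside :: "real \<Rightarrow> real \<Rightarrow> real" where
  "Aside \<alpha> b = sqrt (1 + b\<^sup>2 - 2 * b * cos \<alpha>)"

lemma Aside_g1:
  fixes \<alpha> \<beta> :: real
  assumes "0 < \<alpha>" "0 < \<beta>" "\<alpha> + \<beta> < pi"
  shows "Aside \<alpha> (sin \<beta> / sin (\<alpha>+\<beta>)) = sin \<alpha> / sin (\<alpha>+\<beta>)"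
proof -
  define s where "s = sin (\<alpha>+\<beta>)"
  have s: "s > 0" unfolding s_def using assms by (intro sin_gt_zero) auto
  have sa: "sin \<alpha> > 0" using assms by (intro sin_gt_zero) auto
  have "1 + (sin \<beta> / s)\<^sup>2 - 2 * (sin \<beta> / s) * cos \<alpha>
      = ((sin (\<alpha>+\<beta>))\<^sup>2 + (sin \<beta>)\<^sup>2 - 2 * sin \<beta> * sin (\<alpha>+\<beta>) * cos \<alpha>) / s\<^sup>2"
    using s by (simp add: s_def field_simps power2_eq_square)
  also have "\<dots> = (sin \<alpha> / s)\<^sup>2" by (simp add: trig_id2 power_divide)
  finally show ?thesis using s sa unfolding Aside_def s_def[symmetric] by simp
qed

lemma Aside_rad_pos:
  fixes \<alpha> b :: real
  assumes "0 < \<alpha>" "\<alpha> < pi" "0 \<le> b"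
  shows "1 + b\<^sup>2 - 2 * b * cos \<alpha> > 0"
proof -
  have c: "cos \<alpha> < 1"
    using assms cos_monotone_0_pi[of 0 \<alpha>] by simp
  show ?thesis
  proof (cases "b = 0")
    case True then show ?thesis by simp
  next
    case False
    then have "2 * b * cos \<alpha> < 2 * b" using assms c by simp
    moreover have "(1 - b)\<^sup>2 \<ge> 0" by simp
    ultimately show ?thesis by (simp add: power2_eq_square algebra_simps)
  qed
qed

lemma Aside_pos:
  fixes \<alpha> b :: real
  assumes "0 < \<alpha>" "\<alpha> < pi" "0 \<le> b"
  shows "Aside \<alpha> b > 0"
  using Aside_rad_pos[OF assms] unfolding Aside_def by simp

lemma g2_deriv:
  fixes \<alpha> b :: real
  assumes "0 < \<alpha>" "\<alpha> < pi" "0 \<le> b"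
  shows "((\<lambda>t. Aside t b) has_real_derivative b * sin \<alpha> / Aside \<alpha> b) (at \<alpha>)"
proof -
  have p: "1 + b\<^sup>2 - 2 * b * cos \<alpha> > 0" by (rule Aside_rad_pos[OF assms])
  show ?thesis unfolding Aside_def
    using p by (auto intro!: derivative_eq_intros simp: field_simps)
qed

lemma g2_image:
  fixes b :: real
  assumes b: "0 < b"
  shows "(\<lambda>t. Aside t b) ` {0<..<pi} = {\<bar>1 - b\<bar><..<1 + b}"
proof
  show "(\<lambda>t. Aside t b) ` {0<..<pi} \<subseteq> {\<bar>1 - b\<bar><..<1 + b}"
  proof
    fix y assume "y \<in> (\<lambda>t. Aside t b) ` {0<..<pi}"
    then obtain t where t: "0 < t" "t < pi" "y = Aside t b" by auto
    have c1: "cos t < 1" using t cos_monotone_0_pi[of 0 t] by simp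
    have c2: "cos t > -1" using t cos_monotone_0_pi[of t pi] by simp
    have lo: "(1 - b)\<^sup>2 < 1 + b\<^sup>2 - 2 * b * cos t" using b c1 by (simp add: power2_eq_square algebra_simps)
    have hi: "1 + b\<^sup>2 - 2 * b * cos t < (1 + b)\<^sup>2" using b c2 mult_pos_pos[of b "1 + cos t"] by (simp add: power2_eq_square algebra_simps)
    have "\<bar>1 - b\<bar> < y" unfolding t(3) Aside_def
      using real_sqrt_less_mono[OF lo] by simp
    moreover have "y < 1 + b" unfolding t(3) Aside_def
      using real_sqrt_less_mono[OF hi] b by simp
    ultimately show "y \<in> {\<bar>1 - b\<bar><..<1 + b}" by simp
  qed
  show "{\<bar>1 - b\<bar><..<1 + b} \<subseteq> (\<lambda>t. Aside t b) ` {0<..<pi}"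
  proof
    fix a assume a: "a \<in> {\<bar>1 - b\<bar><..<1 + b}"
    then have a0: "a > 0" by auto
    define z where "z = (1 + b\<^sup>2 - a\<^sup>2) / (2 * b)"
    have "\<bar>1 - b\<bar>\<^sup>2 < a\<^sup>2" using a by (intro power_strict_mono) auto
    then have "(1 - b)\<^sup>2 < a\<^sup>2" by simp
    then have z1: "z < 1" unfolding z_def using b by (simp add: field_simps power2_eq_square)
    have "a\<^sup>2 < (1 + b)\<^sup>2" using a a0 by (intro power_strict_mono) auto
    then have z2: "-1 < z" unfolding z_def using b by (simp add: field_simps power2_eq_square)
    define t where "t = arccos z"
    have t: "0 < t" "t < pi" unfolding t_def using arccos_lt_bounded[of z] z1 z2 by auto
    have ct: "cos t = z" unfolding t_def using z1 z2 by simp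
    have "1 + b\<^sup>2 - 2 * b * cos t = a\<^sup>2" using b by (simp add: ct z_def field_simps)
    then have "Aside t b = a" using a0 unfolding Aside_def by simp
    with t show "a \<in> (\<lambda>t. Aside t b) ` {0<..<pi}" by (intro image_eqI[of _ _ t]) auto
  qed
qed




lemma cos_nz:
  fixes x :: real
  assumes "0 < x" "x < pi" "x \<noteq> pi/2"
  shows "cos x \<noteq> 0"
proof (cases "x < pi/2")
  case True then show ?thesis using assms cos_gt_zero_pi[of x] by simp
next
  case False
  then have "cos (pi - x) > 0" using assms by (intro cos_gt_zero_pi) auto
  then show ?thesis by simp
qed

lemma inner1:
  fixes u :: "real \<times> real \<Rightarrow> ennreal" and \<alpha> :: real
  assumes u[measurable]: "u \<in> borel_measurable (lborel \<Otimes>\<^sub>M lborel)"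
    and a: "0 < \<alpha>" "\<alpha> < pi" "cos \<alpha> \<noteq> 0"
  shows "(\<integral>\<^sup>+\<beta>. u (Gt \<alpha> \<beta>) * indicator {0<..<pi-\<alpha>} \<beta> \<partial>lborel)
       = (\<integral>\<^sup>+b. u (Aside \<alpha> b, b) * ennreal (sin \<alpha> / (Aside \<alpha> b)\<^sup>2) * indicator {0<..} b \<partial>lborel)"
proof -
  define f where "f b = u (Aside \<alpha> b, b) * ennreal (sin \<alpha> / (Aside \<alpha> b)\<^sup>2)" for b
  define g where "g t = sin t / sin (\<alpha> + t)" for t
  define g' where "g' t = sin \<alpha> / (sin (\<alpha> + t))\<^sup>2" for t
  have sa: "sin \<alpha> > 0" using a by (intro sin_gt_zero) auto
  have Mf[measurable]: "f \<in> borel_measurable borel"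
    unfolding f_def Aside_def by measurable
  have spos: "sin (\<alpha> + t) > 0" if "0 < t" "t < pi - \<alpha>" for t
    using that a by (intro sin_gt_zero) auto
  have "(\<integral>\<^sup>+\<beta>. u (Gt \<alpha> \<beta>) * indicator {0<..<pi-\<alpha>} \<beta> \<partial>lborel)
      = (\<integral>\<^sup>+\<beta>. f (g \<beta>) * ennreal (g' \<beta>) * indicator {0<..<pi-\<alpha>} \<beta> \<partial>lborel)"
  proof (rule nn_integral_cong_AE)
    show "AE \<beta> in lborel. u (Gt \<alpha> \<beta>) * indicator {0<..<pi-\<alpha>} \<beta> = f (g \<beta>) * ennreal (g' \<beta>) * indicator {0<..<pi-\<alpha>} \<beta>"
      using AE_lborel_singleton[of "pi/2"]
    proof (rule eventually_mono)
      fix \<beta> :: real assume b2: "\<beta> \<noteq> pi/2"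
      show "u (Gt \<alpha> \<beta>) * indicator {0<..<pi-\<alpha>} \<beta> = f (g \<beta>) * ennreal (g' \<beta>) * indicator {0<..<pi-\<alpha>} \<beta>"
      proof (cases "\<beta> \<in> {0<..<pi-\<alpha>}")
        case False then show ?thesis by simp
      next
        case True
        then have b: "0 < \<beta>" "\<beta> < pi - \<alpha>" by auto
        have cb: "cos \<beta> \<noteq> 0" using cos_nz[of \<beta>] b b2 a by simp
        have s: "sin (\<alpha> + \<beta>) > 0" using spos b by simp
        have G: "Gt \<alpha> \<beta> = (Aside \<alpha> (g \<beta>), g \<beta>)"
          using Gt_eq[of \<alpha> \<beta>] Aside_g1[of \<alpha> \<beta>] a b cb by (simp add: g_def)
        have "ennreal (sin \<alpha> / (Aside \<alpha> (g \<beta>))\<^sup>2) * ennreal (g' \<beta>)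
            = ennreal (sin \<alpha> / (Aside \<alpha> (g \<beta>))\<^sup>2 * g' \<beta>)"
          using sa s by (intro ennreal_mult[symmetric]) (auto simp: g'_def)
        also have "sin \<alpha> / (Aside \<alpha> (g \<beta>))\<^sup>2 * g' \<beta> = 1"
        proof -
          have A: "Aside \<alpha> (g \<beta>) = sin \<alpha> / sin (\<alpha>+\<beta>)"
            using Aside_g1[of \<alpha> \<beta>] a b by (simp add: g_def)
          show ?thesis using sa s by (simp add: A g'_def field_simps power2_eq_square)
        qed
        finally have "ennreal (sin \<alpha> / (Aside \<alpha> (g \<beta>))\<^sup>2) * ennreal (g' \<beta>) = 1" by simp
        then show ?thesis using True by (simp add: f_def G mult.assoc)
      qed
    qed
  qed
  also have "\<dots> = (\<integral>\<^sup>+b. f b * indicator (g ` {0<..<pi-\<alpha>}) b \<partial>lborel)"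
  proof (rule subst_open[OF Mf])
    show "0 < pi - \<alpha>" using a by simp
    show "(g has_real_derivative g' x) (at x)" if "0 < x" "x < pi - \<alpha>" for x
      unfolding g_def g'_def using g1_deriv[of \<alpha> x] spos[OF that] by simp
    show "continuous_on {0<..<pi - \<alpha>} g'"
    proof -
      have nz: "(sin (\<alpha>+t))\<^sup>2 \<noteq> 0" if "t \<in> {0<..<pi-\<alpha>}" for t
        using spos[of t] that by auto
      show ?thesis unfolding g'_def using nz by (intro continuous_intros) auto
    qed
    show "0 \<le> g' x" if "0 < x" "x < pi - \<alpha>" for x
      unfolding g'_def using sa by simp
  qed
  also have "g ` {0<..<pi-\<alpha>} = {0<..}" unfolding g_def by (rule g1_image[OF a(1,2)])
  finally show ?thesis by (simp add: f_def)
qed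



lemma inner2:
  fixes u :: "real \<times> real \<Rightarrow> ennreal" and b :: real
  assumes u[measurable]: "u \<in> borel_measurable (lborel \<Otimes>\<^sub>M lborel)"
    and b: "0 < b"
  shows "(\<integral>\<^sup>+\<alpha>. u (Aside \<alpha> b, b) * ennreal (sin \<alpha> / (Aside \<alpha> b)\<^sup>2) * indicator {0<..<pi} \<alpha> \<partial>lborel)
       = (\<integral>\<^sup>+a. u (a, b) * ennreal (1 / (a * b)) * indicator {\<bar>1 - b\<bar><..<1 + b} a \<partial>lborel)"
proof -
  define f where "f a = u (a, b) * ennreal (1 / (a * b))" for a
  define g where "g t = Aside t b" for t
  define g' where "g' t = b * sin t / Aside t b" for t
  have Mf[measurable]: "f \<in> borel_measurable borel"
    unfolding f_def by measurable
  have Apos: "Aside t b > 0" if "0 < t" "t < pi" for t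
    using Aside_pos[of t b] that b by simp
  have "(\<integral>\<^sup>+\<alpha>. u (Aside \<alpha> b, b) * ennreal (sin \<alpha> / (Aside \<alpha> b)\<^sup>2) * indicator {0<..<pi} \<alpha> \<partial>lborel)
      = (\<integral>\<^sup>+t. f (g t) * ennreal (g' t) * indicator {0<..<pi} t \<partial>lborel)"
  proof (rule nn_integral_cong)
    fix t :: real
    show "u (Aside t b, b) * ennreal (sin t / (Aside t b)\<^sup>2) * indicator {0<..<pi} t = f (g t) * ennreal (g' t) * indicator {0<..<pi} t"
    proof (cases "t \<in> {0<..<pi}")
      case False then show ?thesis by simp
    next
      case True
      then have t: "0 < t" "t < pi" by auto
      have st: "sin t > 0" using t by (intro sin_gt_zero) auto
      have A: "Aside t b > 0" using Apos t by simp
      have "ennreal (1 / (g t * b)) * ennreal (g' t) = ennreal (1 / (g t * b) * g' t)"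
        using A b st by (intro ennreal_mult[symmetric]) (auto simp: g_def g'_def)
      also have "1 / (g t * b) * g' t = sin t / (Aside t b)\<^sup>2"
        using A b by (simp add: g_def g'_def field_simps power2_eq_square)
      finally show ?thesis using True by (simp add: f_def g_def mult.assoc)
    qed
  qed
  also have "\<dots> = (\<integral>\<^sup>+a. f a * indicator (g ` {0<..<pi}) a \<partial>lborel)"
  proof (rule subst_open[OF Mf])
    show "(0::real) < pi" by simp
    show "(g has_real_derivative g' x) (at x)" if "0 < x" "x < pi" for x
      unfolding g_def g'_def using g2_deriv[of x b] that b by simp
    show "continuous_on {0<..<pi} g'"
    proof -
      have nz: "Aside t b \<noteq> 0" if "t \<in> {0<..<pi}" for t
        using Apos[of t] that by auto
      show ?thesis unfolding g'_def Aside_def using nz unfolding Aside_def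
        by (intro continuous_intros) auto
    qed
    show "0 \<le> g' x" if "0 < x" "x < pi" for x
      unfolding g'_def using Apos[OF that] b sin_gt_zero[OF that] by simp
  qed
  also have "g ` {0<..<pi} = {\<bar>1 - b\<bar><..<1 + b}" unfolding g_def by (rule g2_image[OF b])
  finally show ?thesis by (simp add: f_def)
qed




definition DD :: "(real \<times> real) set" where
  "DD = {p. 0 < fst p \<and> 0 < snd p \<and> fst p + snd p < pi}"

lemma DD_meas[measurable]: "DD \<in> sets (lborel \<Otimes>\<^sub>M lborel)"
proof -
  have "{p \<in> space (lborel \<Otimes>\<^sub>M lborel). 0 < fst p \<and> 0 < snd p \<and> fst p + snd p < pi} \<in> sets (lborel \<Otimes>\<^sub>M lborel)"
    by measurable
  then show ?thesis unfolding DD_def by (simp add: space_pair_measure)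
qed

lemma pred_interval[measurable]: "Measurable.pred (borel \<Otimes>\<^sub>M borel) (\<lambda>x::real\<times>real. fst x \<in> {\<bar>1 - snd x\<bar><..<1 + snd x})"
  by (simp only: greaterThanLessThan_iff) measurable

lemma Gt_meas[measurable]: "(\<lambda>p. Gt (fst p) (snd p)) \<in> (lborel \<Otimes>\<^sub>M lborel) \<rightarrow>\<^sub>M (lborel \<Otimes>\<^sub>M lborel)"
  unfolding Gt_def tri_C_def by measurable

lemma Aside_meas[measurable]: "(\<lambda>p. Aside (fst p) (snd p)) \<in> borel_measurable (lborel \<Otimes>\<^sub>M lborel)"
  unfolding Aside_def by measurable

lemma stepC:
  fixes u :: "real \<times> real \<Rightarrow> ennreal"
  assumes u[measurable]: "u \<in> borel_measurable (lborel \<Otimes>\<^sub>M lborel)"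
  shows "(\<integral>\<^sup>+p. indicator DD p * u (Gt (fst p) (snd p)) \<partial>(lborel \<Otimes>\<^sub>M lborel))
       = (\<integral>\<^sup>+p. indicator {0<..} (snd p) * indicator {\<bar>1 - snd p\<bar><..<1 + snd p} (fst p)
              * u p * ennreal (1 / (fst p * snd p)) \<partial>(lborel \<Otimes>\<^sub>M lborel))"
  (is "?L = ?R")
proof -
  define W where "W \<alpha> b = indicator {0<..<pi} \<alpha> * (u (Aside \<alpha> b, b) * ennreal (sin \<alpha> / (Aside \<alpha> b)\<^sup>2) * indicator {0<..} b)" for \<alpha> b :: real
  define V where "V a b = indicator {0<..} b * (u (a, b) * ennreal (1 / (a * b)) * indicator {\<bar>1 - b\<bar><..<1 + b} a)" for a b :: real
  have uG[measurable]: "(\<lambda>p. u (Gt (fst p) (snd p))) \<in> borel_measurable (lborel \<Otimes>\<^sub>M lborel)"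
    using measurable_compose[OF Gt_meas u] by (simp add: comp_def)
  have MH: "(\<lambda>p. indicator DD p * u (Gt (fst p) (snd p))) \<in> borel_measurable (lborel \<Otimes>\<^sub>M lborel)"
    by measurable
  have MW[measurable]: "(\<lambda>(x, y). W x y) \<in> borel_measurable (lborel \<Otimes>\<^sub>M lborel)"
    unfolding W_def by measurable
  have MV[measurable]: "(\<lambda>(x, y). V x y) \<in> borel_measurable (lborel \<Otimes>\<^sub>M lborel)"
    unfolding V_def by measurable
  have "?L = (\<integral>\<^sup>+\<alpha>. \<integral>\<^sup>+\<beta>. indicator DD (\<alpha>, \<beta>) * u (Gt \<alpha> \<beta>) \<partial>lborel \<partial>lborel)"
    by (subst lborel.nn_integral_fst[symmetric]) (use MH in simp_all)
  also have "\<dots> = (\<integral>\<^sup>+\<alpha>. \<integral>\<^sup>+b. W \<alpha> b \<partial>lborel \<partial>lborel)"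
  proof (rule nn_integral_cong_AE)
    show "AE \<alpha> in lborel. (\<integral>\<^sup>+\<beta>. indicator DD (\<alpha>, \<beta>) * u (Gt \<alpha> \<beta>) \<partial>lborel) = (\<integral>\<^sup>+b. W \<alpha> b \<partial>lborel)"
      using AE_lborel_singleton[of "pi/2"]
    proof (rule eventually_mono)
      fix \<alpha> :: real assume a2: "\<alpha> \<noteq> pi/2"
      show "(\<integral>\<^sup>+\<beta>. indicator DD (\<alpha>, \<beta>) * u (Gt \<alpha> \<beta>) \<partial>lborel) = (\<integral>\<^sup>+b. W \<alpha> b \<partial>lborel)"
      proof (cases "\<alpha> \<in> {0<..<pi}")
        case False
        then have "indicator DD (\<alpha>, \<beta>) = (0::ennreal)" for \<beta>
          by (auto simp: DD_def indicator_def)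
        moreover have "W \<alpha> b = 0" for b using False by (simp add: W_def)
        ultimately show ?thesis by simp
      next
        case True
        then have a: "0 < \<alpha>" "\<alpha> < pi" by auto
        have ca: "cos \<alpha> \<noteq> 0" using cos_nz[of \<alpha>] a a2 by simp
        have "(\<integral>\<^sup>+\<beta>. indicator DD (\<alpha>, \<beta>) * u (Gt \<alpha> \<beta>) \<partial>lborel)
            = (\<integral>\<^sup>+\<beta>. u (Gt \<alpha> \<beta>) * indicator {0<..<pi-\<alpha>} \<beta> \<partial>lborel)"
          using a by (intro nn_integral_cong) (auto simp: DD_def indicator_def)
        also have "\<dots> = (\<integral>\<^sup>+b. u (Aside \<alpha> b, b) * ennreal (sin \<alpha> / (Aside \<alpha> b)\<^sup>2) * indicator {0<..} b \<partial>lborel)"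
          by (rule inner1[OF u a ca])
        also have "\<dots> = (\<integral>\<^sup>+b. W \<alpha> b \<partial>lborel)"
          using True by (simp add: W_def)
        finally show ?thesis .
      qed
    qed
  qed
  also have "\<dots> = (\<integral>\<^sup>+b. \<integral>\<^sup>+\<alpha>. W \<alpha> b \<partial>lborel \<partial>lborel)"
    by (rule lborel_pair.Fubini'[symmetric]) (rule MW)
  also have "\<dots> = (\<integral>\<^sup>+b. \<integral>\<^sup>+a. V a b \<partial>lborel \<partial>lborel)"
  proof (rule nn_integral_cong)
    fix b :: real
    show "(\<integral>\<^sup>+\<alpha>. W \<alpha> b \<partial>lborel) = (\<integral>\<^sup>+a. V a b \<partial>lborel)"
    proof (cases "0 < b")
      case False then show ?thesis by (simp add: W_def V_def)
    next
      case True
      have "(\<integral>\<^sup>+\<alpha>. W \<alpha> b \<partial>lborel)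
          = (\<integral>\<^sup>+\<alpha>. u (Aside \<alpha> b, b) * ennreal (sin \<alpha> / (Aside \<alpha> b)\<^sup>2) * indicator {0<..<pi} \<alpha> \<partial>lborel)"
        using True by (intro nn_integral_cong) (simp add: W_def mult.commute)
      also have "\<dots> = (\<integral>\<^sup>+a. u (a, b) * ennreal (1 / (a * b)) * indicator {\<bar>1 - b\<bar><..<1 + b} a \<partial>lborel)"
        by (rule inner2[OF u True])
      also have "\<dots> = (\<integral>\<^sup>+a. V a b \<partial>lborel)"
        using True by (simp add: V_def)
      finally show ?thesis .
    qed
  qed
  also have "\<dots> = (\<integral>\<^sup>+a. \<integral>\<^sup>+b. V a b \<partial>lborel \<partial>lborel)"
    by (rule lborel_pair.Fubini') (rule MV)
  also have "\<dots> = (\<integral>\<^sup>+p. V (fst p) (snd p) \<partial>(lborel \<Otimes>\<^sub>M lborel))"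
    by (subst lborel.nn_integral_fst[symmetric]) (use MV in \<open>simp_all add: case_prod_beta'\<close>)
  also have "\<dots> = ?R"
    by (intro nn_integral_cong) (simp add: V_def mult_ac)
  finally show ?thesis .
qed

definition UU :: "(real \<times> real) set" where
  "UU = {p. fst p < pi \<and> snd p < pi \<and> pi < fst p + snd p}"

lemma UU_meas[measurable]: "UU \<in> sets (lborel \<Otimes>\<^sub>M lborel)"
proof -
  have "{p \<in> space (lborel \<Otimes>\<^sub>M lborel). fst p < pi \<and> snd p < pi \<and> pi < fst p + snd p} \<in> sets (lborel \<Otimes>\<^sub>M lborel)"
    by measurable
  then show ?thesis unfolding UU_def by (simp add: space_pair_measure)
qed

lemma stepB:
  fixes u :: "real \<times> real \<Rightarrow> ennreal"
  assumes u[measurable]: "u \<in> borel_measurable (lborel \<Otimes>\<^sub>M lborel)"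
  shows "(\<integral>\<^sup>+p. indicator UU p * u (Gt (pi - snd p) (pi - fst p)) \<partial>(lborel \<Otimes>\<^sub>M lborel))
       = (\<integral>\<^sup>+p. indicator DD p * u (Gt (fst p) (snd p)) \<partial>(lborel \<Otimes>\<^sub>M lborel))"
  (is "?L = ?R")
proof -
  define HU where "HU x y = indicator UU (x, y) * u (Gt (pi - y) (pi - x))" for x y :: real
  define HD where "HD x y = indicator DD (x, y) * u (Gt x y)" for x y :: real
  have uG[measurable]: "(\<lambda>p. u (Gt (fst p) (snd p))) \<in> borel_measurable (lborel \<Otimes>\<^sub>M lborel)"
    using measurable_compose[OF Gt_meas u] by (simp add: comp_def)
  have uG2[measurable]: "(\<lambda>p. u (Gt (pi - snd p) (pi - fst p))) \<in> borel_measurable (lborel \<Otimes>\<^sub>M lborel)"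
  proof -
    have r: "(\<lambda>p::real\<times>real. (pi - snd p, pi - fst p)) \<in> (lborel \<Otimes>\<^sub>M lborel) \<rightarrow>\<^sub>M (lborel \<Otimes>\<^sub>M lborel)"
      by measurable
    show ?thesis using measurable_compose[OF r uG] by (simp add: comp_def)
  qed
  have MHU[measurable]: "(\<lambda>(x, y). HU x y) \<in> borel_measurable (lborel \<Otimes>\<^sub>M lborel)"
    unfolding HU_def by measurable
  have MHD[measurable]: "(\<lambda>(x, y). HD x y) \<in> borel_measurable (lborel \<Otimes>\<^sub>M lborel)"
    unfolding HD_def by measurable
  have MHU1: "(\<lambda>y. \<integral>\<^sup>+x. HU x y \<partial>lborel) \<in> borel_measurable borel"
    by measurable
  have MHU2: "HU x \<in> borel_measurable borel" for x
    by measurable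
  have "?L = (\<integral>\<^sup>+x. \<integral>\<^sup>+y. HU x y \<partial>lborel \<partial>lborel)"
    by (subst lborel.nn_integral_fst[symmetric]) (use MHU in \<open>simp_all add: HU_def[abs_def] case_prod_beta'\<close>)
  also have "\<dots> = (\<integral>\<^sup>+y. \<integral>\<^sup>+x. HU x y \<partial>lborel \<partial>lborel)"
    by (rule lborel_pair.Fubini'[symmetric]) (rule MHU)
  also have "\<dots> = (\<integral>\<^sup>+\<alpha>. \<integral>\<^sup>+x. HU x (pi - \<alpha>) \<partial>lborel \<partial>lborel)"
    using nn_integral_real_affine[OF MHU1, of "-1" pi] by simp
  also have "\<dots> = (\<integral>\<^sup>+\<alpha>. \<integral>\<^sup>+\<beta>. HU (pi - \<beta>) (pi - \<alpha>) \<partial>lborel \<partial>lborel)"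
  proof (rule nn_integral_cong)
    fix \<alpha> :: real
    have m: "(\<lambda>x. HU x (pi - \<alpha>)) \<in> borel_measurable borel" by measurable
    show "(\<integral>\<^sup>+x. HU x (pi - \<alpha>) \<partial>lborel) = (\<integral>\<^sup>+\<beta>. HU (pi - \<beta>) (pi - \<alpha>) \<partial>lborel)"
      using nn_integral_real_affine[OF m, of "-1" pi] by simp
  qed
  also have "\<dots> = (\<integral>\<^sup>+\<alpha>. \<integral>\<^sup>+\<beta>. HD \<alpha> \<beta> \<partial>lborel \<partial>lborel)"
    by (intro nn_integral_cong) (auto simp: HU_def HD_def UU_def DD_def indicator_def)
  also have "\<dots> = ?R"
    by (subst lborel.nn_integral_fst[symmetric]) (use MHD in \<open>simp_all add: HD_def[abs_def] case_prod_beta'\<close>)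
  finally show ?thesis .
qed




lemma side_Gt: "(side_a x y, side_b x y) = Gt (fst (tri_angles x y)) (snd (tri_angles x y))"
  unfolding side_a_def side_b_def Gt_def by simp

lemma cond_equiv:
  fixes a b :: real
  shows "(0 < b \<and> \<bar>1 - b\<bar> < a \<and> a < 1 + b) \<longleftrightarrow> (0 < a \<and> \<bar>1 - a\<bar> < b \<and> b < 1 + a)"
  by (auto simp: abs_if split: if_splits)

lemma key:
  fixes u :: "real \<times> real \<Rightarrow> ennreal"
  assumes u[measurable]: "u \<in> borel_measurable (lborel \<Otimes>\<^sub>M lborel)"
  shows "(\<integral>\<^sup>+p. ennreal (indicator {0..pi} (fst p) / pi) * ennreal (indicator {0..pi} (snd p) / pi)
              * u (side_a (fst p) (snd p), side_b (fst p) (snd p)) \<partial>(lborel \<Otimes>\<^sub>M lborel))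
       = (\<integral>\<^sup>+p. ennreal (joint_density (fst p) (snd p)) * u p \<partial>(lborel \<Otimes>\<^sub>M lborel))"
  (is "?L = ?R")
proof -
  define c where "c = ennreal (1 / pi\<^sup>2)"
  define H where "H x y = ennreal (indicator {0..pi} x / pi) * ennreal (indicator {0..pi} y / pi) * u (side_a x y, side_b x y)" for x y
  define HD where "HD p = indicator DD p * u (Gt (fst p) (snd p))" for p
  define HU where "HU p = indicator UU p * u (Gt (pi - snd p) (pi - fst p))" for p
  define V where "V p = indicator {0<..} (snd p) * indicator {\<bar>1 - snd p\<bar><..<1 + snd p} (fst p)
              * u p * ennreal (1 / (fst p * snd p))" for p :: "real \<times> real"
  have uG[measurable]: "(\<lambda>p. u (Gt (fst p) (snd p))) \<in> borel_measurable (lborel \<Otimes>\<^sub>M lborel)"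
    using measurable_compose[OF Gt_meas u] by (simp add: comp_def)
  have uG2[measurable]: "(\<lambda>p. u (Gt (pi - snd p) (pi - fst p))) \<in> borel_measurable (lborel \<Otimes>\<^sub>M lborel)"
  proof -
    have r: "(\<lambda>p::real\<times>real. (pi - snd p, pi - fst p)) \<in> (lborel \<Otimes>\<^sub>M lborel) \<rightarrow>\<^sub>M (lborel \<Otimes>\<^sub>M lborel)"
      by measurable
    show ?thesis using measurable_compose[OF r uG] by (simp add: comp_def)
  qed
  have F_meas: "(\<lambda>p. (side_a (fst p) (snd p), side_b (fst p) (snd p))) \<in> (lborel \<Otimes>\<^sub>M lborel) \<rightarrow>\<^sub>M (lborel \<Otimes>\<^sub>M lborel)"
    unfolding side_a_def side_b_def tri_C_def tri_angles_def by measurable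
  have uF[measurable]: "(\<lambda>p. u (side_a (fst p) (snd p), side_b (fst p) (snd p))) \<in> borel_measurable (lborel \<Otimes>\<^sub>M lborel)"
    using measurable_compose[OF F_meas u] by (simp add: comp_def)
  have MH: "(\<lambda>(x, y). H x y) \<in> borel_measurable (lborel \<Otimes>\<^sub>M lborel)"
    unfolding H_def by measurable
  have MHD[measurable]: "HD \<in> borel_measurable (lborel \<Otimes>\<^sub>M lborel)"
    unfolding HD_def by measurable
  have MHU[measurable]: "HU \<in> borel_measurable (lborel \<Otimes>\<^sub>M lborel)"
    unfolding HU_def by measurable
  have MS: "(\<lambda>p. c * (HD p + HU p)) \<in> borel_measurable (lborel \<Otimes>\<^sub>M lborel)"
    by measurable
  have MV[measurable]: "V \<in> borel_measurable (lborel \<Otimes>\<^sub>M lborel)"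
    unfolding V_def by measurable
  have pt: "H x y = c * (HD (x, y) + HU (x, y))"
    if "x \<noteq> 0" "x \<noteq> pi" "y \<noteq> 0" "y \<noteq> pi" "y \<noteq> pi - x" for x y
  proof (cases "x \<in> {0<..<pi} \<and> y \<in> {0<..<pi}")
    case True
    then have xy: "0 < x" "x < pi" "0 < y" "y < pi" by auto
    have i: "ennreal (1 / pi) * ennreal (1 / pi) = c"
      unfolding c_def by (simp add: ennreal_mult[symmetric] power2_eq_square)
    show ?thesis
    proof (cases "x + y < pi")
      case True
      then have "tri_angles x y = (x, y)" by (simp add: tri_angles_def)
      then show ?thesis using True xy
        by (simp add: H_def HD_def HU_def DD_def UU_def i side_Gt)
    next
      case False
      then have g: "x + y > pi" using that by auto
      then have "tri_angles x y = (pi - y, pi - x)" by (simp add: tri_angles_def)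
      then show ?thesis using g xy
        by (simp add: H_def HD_def HU_def DD_def UU_def i side_Gt)
    qed
  next
    case False
    then have z: "ennreal (indicator {0..pi} x / pi) * ennreal (indicator {0..pi} y / pi) = 0"
      using that by (auto simp: indicator_def)
    have "p \<notin> DD" "p \<notin> UU" if "p = (x, y)" for p
      using False that \<open>x \<noteq> 0\<close> \<open>y \<noteq> 0\<close> \<open>x \<noteq> pi\<close> \<open>y \<noteq> pi\<close>
      by (auto simp: DD_def UU_def)
    then show ?thesis by (simp add: H_def HD_def HU_def z)
  qed
  have "?L = (\<integral>\<^sup>+x. \<integral>\<^sup>+y. H x y \<partial>lborel \<partial>lborel)"
    by (subst lborel.nn_integral_fst[symmetric]) (use MH in \<open>simp_all add: H_def[abs_def] case_prod_beta'\<close>)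
  also have "\<dots> = (\<integral>\<^sup>+x. \<integral>\<^sup>+y. c * (HD (x, y) + HU (x, y)) \<partial>lborel \<partial>lborel)"
  proof (rule nn_integral_cong_AE)
    have "AE x in lborel. x \<noteq> 0 \<and> x \<noteq> pi"
      using AE_lborel_singleton[of 0] AE_lborel_singleton[of pi] by eventually_elim auto
    then show "AE x in lborel. (\<integral>\<^sup>+y. H x y \<partial>lborel) = (\<integral>\<^sup>+y. c * (HD (x, y) + HU (x, y)) \<partial>lborel)"
    proof (rule eventually_mono)
      fix x :: real assume x: "x \<noteq> 0 \<and> x \<noteq> pi"
      show "(\<integral>\<^sup>+y. H x y \<partial>lborel) = (\<integral>\<^sup>+y. c * (HD (x, y) + HU (x, y)) \<partial>lborel)"
      proof (rule nn_integral_cong_AE)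
        show "AE y in lborel. H x y = c * (HD (x, y) + HU (x, y))"
          using AE_lborel_singleton[of 0] AE_lborel_singleton[of pi] AE_lborel_singleton[of "pi - x"]
          by eventually_elim (use x pt in auto)
      qed
    qed
  qed
  also have "\<dots> = (\<integral>\<^sup>+p. c * (HD p + HU p) \<partial>(lborel \<Otimes>\<^sub>M lborel))"
    by (subst lborel.nn_integral_fst[symmetric]) (use MS in simp_all)
  also have "\<dots> = c * ((\<integral>\<^sup>+p. HD p \<partial>(lborel \<Otimes>\<^sub>M lborel)) + (\<integral>\<^sup>+p. HU p \<partial>(lborel \<Otimes>\<^sub>M lborel)))"
    by (simp add: nn_integral_cmult nn_integral_add)
  also have "(\<integral>\<^sup>+p. HU p \<partial>(lborel \<Otimes>\<^sub>M lborel)) = (\<integral>\<^sup>+p. HD p \<partial>(lborel \<Otimes>\<^sub>M lborel))"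
    unfolding HU_def HD_def by (rule stepB[OF u])
  also have "(\<integral>\<^sup>+p. HD p \<partial>(lborel \<Otimes>\<^sub>M lborel)) = (\<integral>\<^sup>+p. V p \<partial>(lborel \<Otimes>\<^sub>M lborel))"
    unfolding HD_def V_def by (rule stepC[OF u])
  also have "c * ((\<integral>\<^sup>+p. V p \<partial>(lborel \<Otimes>\<^sub>M lborel)) + (\<integral>\<^sup>+p. V p \<partial>(lborel \<Otimes>\<^sub>M lborel)))
      = (\<integral>\<^sup>+p. (c * 2) * V p \<partial>(lborel \<Otimes>\<^sub>M lborel))"
    by (simp add: nn_integral_cmult mult_2[symmetric] mult.assoc)
  also have "\<dots> = ?R"
  proof (rule nn_integral_cong)
    fix p :: "real \<times> real"
    obtain a b where p: "p = (a, b)" by fastforce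
    show "(c * 2) * V p = ennreal (joint_density (fst p) (snd p)) * u p"
    proof (cases "0 < b \<and> \<bar>1 - b\<bar> < a \<and> a < 1 + b")
      case True
      then have ab: "0 < a" "0 < b" "\<bar>1 - a\<bar> < b" "b < 1 + a" using cond_equiv[of b a] by auto
      have "c * 2 * ennreal (1 / (a * b)) = ennreal (2 / (pi\<^sup>2 * a * b))"
        unfolding c_def using ab by (simp add: ennreal_mult[symmetric] ennreal_numeral[symmetric] del: ennreal_numeral)
      then show ?thesis using True ab p
        by (simp add: V_def joint_density_def mult_ac)
    next
      case False
      then have "\<not> (0 < a \<and> \<bar>1 - a\<bar> < b \<and> b < 1 + a)" using cond_equiv[of b a] by auto
      then show ?thesis using False p by (auto simp: V_def joint_density_def indicator_def)
    qed
  qed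
  finally show ?thesis .
qed



lemma log_int:
  fixes p q C :: real
  assumes pq: "0 < p" "p < q" and C: "0 \<le> C"
  shows "(\<integral>\<^sup>+y. ennreal (C / y) * indicator {p<..<q} y \<partial>lborel) = ennreal (C * (ln q - ln p))"
proof -
  define f where "f y = ennreal (C / y)" for y :: real
  have Mf: "f \<in> borel_measurable borel" unfolding f_def by measurable
  have "(\<integral>\<^sup>+t. f (exp t) * ennreal (exp t) * indicator {ln p<..<ln q} t \<partial>lborel)
      = (\<integral>\<^sup>+y. f y * indicator (exp ` {ln p<..<ln q}) y \<partial>lborel)"
    by (rule subst_open[OF Mf]) (use pq in \<open>auto intro!: derivative_eq_intros continuous_intros\<close>)
  also have "exp ` {ln p<..<ln q} = {p<..<q}"
  proof
    show "exp ` {ln p<..<ln q} \<subseteq> {p<..<q}"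
    proof
      fix y assume "y \<in> exp ` {ln p<..<ln q}"
      then obtain t where t: "ln p < t" "t < ln q" "y = exp t" by auto
      have "exp (ln p) < exp t" "exp t < exp (ln q)" using t by auto
      then show "y \<in> {p<..<q}" using pq t by simp
    qed
    show "{p<..<q} \<subseteq> exp ` {ln p<..<ln q}"
    proof
      fix y assume y: "y \<in> {p<..<q}"
      then have "y > 0" using pq by auto
      then show "y \<in> exp ` {ln p<..<ln q}"
        using y pq by (intro image_eqI[of _ _ "ln y"]) auto
    qed
  qed
  also have "(\<integral>\<^sup>+t. f (exp t) * ennreal (exp t) * indicator {ln p<..<ln q} t \<partial>lborel)
      = (\<integral>\<^sup>+t. ennreal C * indicator {ln p<..<ln q} t \<partial>lborel)"
    by (intro nn_integral_cong) (simp add: f_def ennreal_mult[symmetric] C)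
  also have "\<dots> = ennreal C * ennreal (ln q - ln p)"
    using pq by (simp add: nn_integral_cmult_indicator)
  finally show ?thesis unfolding f_def using C pq by (simp add: ennreal_mult)
qed

lemma marginal_ae:
  "AE x in lborel. (\<integral>\<^sup>+y. ennreal (joint_density x y) \<partial>lborel) = ennreal (marginal_density_a x)"
  using AE_lborel_singleton[of 1]
proof (rule eventually_mono)
  fix x :: real assume x1: "x \<noteq> 1"
  show "(\<integral>\<^sup>+y. ennreal (joint_density x y) \<partial>lborel) = ennreal (marginal_density_a x)"
  proof (cases "x > 0")
    case False
    then show ?thesis by (simp add: joint_density_def marginal_density_a_def)
  next
    case True
    have p: "0 < \<bar>1 - x\<bar>" "\<bar>1 - x\<bar> < 1 + x" using True x1 by auto
    have "(\<integral>\<^sup>+y. ennreal (joint_density x y) \<partial>lborel)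
        = (\<integral>\<^sup>+y. ennreal (2 / (pi\<^sup>2 * x) / y) * indicator {\<bar>1 - x\<bar><..<1 + x} y \<partial>lborel)"
      using True by (intro nn_integral_cong) (auto simp: joint_density_def indicator_def)
    also have "\<dots> = ennreal (2 / (pi\<^sup>2 * x) * (ln (1 + x) - ln \<bar>1 - x\<bar>))"
      using True by (intro log_int p) simp
    also have "2 / (pi\<^sup>2 * x) * (ln (1 + x) - ln \<bar>1 - x\<bar>) = marginal_density_a x"
      using True by (simp add: marginal_density_a_def)
    finally show ?thesis .
  qed
qed




theorem mainTheorem17:
  fixes M :: "'a measure" and \<phi> \<psi> :: "'a \<Rightarrow> real"
  assumes "prob_space M"
    and "distributed M lborel \<phi> (\<lambda>x. ennreal (indicator {0..pi} x / pi))"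
    and "distributed M lborel \<psi> (\<lambda>x. ennreal (indicator {0..pi} x / pi))"
    and "prob_space.indep_var M borel \<phi> borel \<psi>"
  shows "distributed M (lborel \<Otimes>\<^sub>M lborel)
           (\<lambda>\<omega>. (side_a (\<phi> \<omega>) (\<psi> \<omega>), side_b (\<phi> \<omega>) (\<psi> \<omega>)))
           (\<lambda>(x, y). ennreal (joint_density x y))
       \<and> distributed M lborel (\<lambda>\<omega>. side_a (\<phi> \<omega>) (\<psi> \<omega>))
           (\<lambda>x. ennreal (marginal_density_a x))"
proof -
  let ?P = "\<lambda>x::real. ennreal (indicator {0..pi} x / pi)"
  let ?L2 = "lborel \<Otimes>\<^sub>M lborel :: (real \<times> real) measure"
  have sf: "sigma_finite_measure (lborel :: real measure)"
    by (rule lborel.sigma_finite_measure_axioms)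
  have indep: "prob_space.indep_var M lborel \<phi> lborel \<psi>"
    using assms(4) unfolding prob_space.indep_var_eq[OF assms(1)] by simp
  have J: "distributed M ?L2 (\<lambda>x. (\<phi> x, \<psi> x)) (\<lambda>(x, y). ?P x * ?P y)"
    by (rule prob_space.distributed_joint_indep[OF assms(1) sf sf assms(2) assms(3) indep])
  have Jm: "(\<lambda>x. (\<phi> x, \<psi> x)) \<in> M \<rightarrow>\<^sub>M ?L2" using J by (simp add: distributed_def)
  have Jd: "distr M ?L2 (\<lambda>x. (\<phi> x, \<psi> x)) = density ?L2 (\<lambda>(x, y). ?P x * ?P y)"
    using J by (simp add: distributed_def)
  define F where "F p = (side_a (fst p) (snd p), side_b (fst p) (snd p))" for p :: "real \<times> real"
  have Fm: "F \<in> ?L2 \<rightarrow>\<^sub>M ?L2"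
    unfolding F_def side_a_def side_b_def tri_C_def tri_angles_def by measurable
  define k where "k = (\<lambda>(x, y). ennreal (joint_density x y))"
  have km[measurable]: "k \<in> borel_measurable ?L2"
    unfolding k_def joint_density_def by measurable
  have Xm: "(\<lambda>\<omega>. (side_a (\<phi> \<omega>) (\<psi> \<omega>), side_b (\<phi> \<omega>) (\<psi> \<omega>))) = F \<circ> (\<lambda>x. (\<phi> x, \<psi> x))"
    by (simp add: F_def comp_def)
  have dX: "distr M ?L2 (\<lambda>\<omega>. (side_a (\<phi> \<omega>) (\<psi> \<omega>), side_b (\<phi> \<omega>) (\<psi> \<omega>))) = density ?L2 k"
  proof -
    have "distr M ?L2 (\<lambda>\<omega>. (side_a (\<phi> \<omega>) (\<psi> \<omega>), side_b (\<phi> \<omega>) (\<psi> \<omega>)))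
        = distr (distr M ?L2 (\<lambda>x. (\<phi> x, \<psi> x))) ?L2 F"
      unfolding Xm by (rule distr_distr[OF Fm Jm, symmetric])
    also have "\<dots> = distr (density ?L2 (\<lambda>(x, y). ?P x * ?P y)) ?L2 F" by (simp add: Jd)
    also have "\<dots> = density ?L2 k"
    proof (rule measure_eqI)
      show "sets (distr (density ?L2 (\<lambda>(x, y). ?P x * ?P y)) ?L2 F) = sets (density ?L2 k)" by simp
      fix A assume A: "A \<in> sets (distr (density ?L2 (\<lambda>(x, y). ?P x * ?P y)) ?L2 F)"
      then have A': "A \<in> sets ?L2" by simp
      have ui: "indicator A \<in> borel_measurable ?L2" using A' by simp
      have "emeasure (distr (density ?L2 (\<lambda>(x, y). ?P x * ?P y)) ?L2 F) A
          = emeasure (density ?L2 (\<lambda>(x, y). ?P x * ?P y)) (F -` A \<inter> space ?L2)"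
        using A' Fm by (subst emeasure_distr) (auto simp: measurable_density_eq1 cong: measurable_cong_sets)
      also have "\<dots> = (\<integral>\<^sup>+p. (\<lambda>(x, y). ?P x * ?P y) p * indicator (F -` A \<inter> space ?L2) p \<partial>?L2)"
        using measurable_sets[OF Fm A'] by (intro emeasure_density) auto
      also have "\<dots> = (\<integral>\<^sup>+p. ?P (fst p) * ?P (snd p) * indicator A (side_a (fst p) (snd p), side_b (fst p) (snd p)) \<partial>?L2)"
        by (intro nn_integral_cong) (auto simp: F_def space_pair_measure indicator_def case_prod_beta)
      also have "\<dots> = (\<integral>\<^sup>+p. ennreal (joint_density (fst p) (snd p)) * indicator A p \<partial>?L2)"
        by (rule key[OF ui])
      also have "\<dots> = emeasure (density ?L2 k) A"
        by (subst emeasure_density[OF km A']) (simp add: k_def case_prod_beta)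
      finally show "emeasure (distr (density ?L2 (\<lambda>(x, y). ?P x * ?P y)) ?L2 F) A = emeasure (density ?L2 k) A" .
    qed
    finally show ?thesis .
  qed
  have Xmeas: "(\<lambda>\<omega>. (side_a (\<phi> \<omega>) (\<psi> \<omega>), side_b (\<phi> \<omega>) (\<psi> \<omega>))) \<in> M \<rightarrow>\<^sub>M ?L2"
    unfolding Xm by (rule measurable_comp[OF Jm Fm])
  have part1: "distributed M ?L2 (\<lambda>\<omega>. (side_a (\<phi> \<omega>) (\<psi> \<omega>), side_b (\<phi> \<omega>) (\<psi> \<omega>))) k"
    unfolding distributed_def using dX km Xmeas by simp
  define m where "m x = ennreal (marginal_density_a x)" for x
  have mm[measurable]: "m \<in> borel_measurable lborel"
    unfolding m_def marginal_density_a_def by measurable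
  have fm: "fst \<in> ?L2 \<rightarrow>\<^sub>M lborel" by measurable
  have Am: "(\<lambda>\<omega>. side_a (\<phi> \<omega>) (\<psi> \<omega>)) = fst \<circ> (\<lambda>\<omega>. (side_a (\<phi> \<omega>) (\<psi> \<omega>), side_b (\<phi> \<omega>) (\<psi> \<omega>)))"
    by (simp add: comp_def)
  have dA: "distr M lborel (\<lambda>\<omega>. side_a (\<phi> \<omega>) (\<psi> \<omega>)) = density lborel m"
  proof -
    have "distr M lborel (\<lambda>\<omega>. side_a (\<phi> \<omega>) (\<psi> \<omega>)) = distr (density ?L2 k) lborel fst"
      unfolding Am dX[symmetric] by (rule distr_distr[OF fm Xmeas, symmetric])
    also have "\<dots> = density lborel m"
    proof (rule measure_eqI)
      show "sets (distr (density ?L2 k) lborel fst) = sets (density lborel m)" by simp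
      fix A assume A: "A \<in> sets (distr (density ?L2 k) lborel fst)"
      then have A': "A \<in> sets lborel" by simp
      have "emeasure (distr (density ?L2 k) lborel fst) A = emeasure (density ?L2 k) (fst -` A \<inter> space ?L2)"
        using A' fm by (subst emeasure_distr) (auto cong: measurable_cong_sets)
      also have "\<dots> = (\<integral>\<^sup>+p. k p * indicator (fst -` A \<inter> space ?L2) p \<partial>?L2)"
        using measurable_sets[OF fm A'] by (intro emeasure_density) auto
      also have "\<dots> = (\<integral>\<^sup>+x. \<integral>\<^sup>+y. ennreal (joint_density x y) * indicator A x \<partial>lborel \<partial>lborel)"
      proof -
        have "(\<integral>\<^sup>+p. k p * indicator (fst -` A \<inter> space ?L2) p \<partial>?L2)
            = (\<integral>\<^sup>+p. ennreal (joint_density (fst p) (snd p)) * indicator A (fst p) \<partial>?L2)"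
          by (intro nn_integral_cong) (auto simp: k_def space_pair_measure indicator_def case_prod_beta)
        also have "\<dots> = (\<integral>\<^sup>+x. \<integral>\<^sup>+y. ennreal (joint_density x y) * indicator A x \<partial>lborel \<partial>lborel)"
          using A' by (subst lborel.nn_integral_fst[symmetric]) (auto simp: joint_density_def)
        finally show ?thesis .
      qed
      also have "\<dots> = (\<integral>\<^sup>+x. m x * indicator A x \<partial>lborel)"
      proof (rule nn_integral_cong_AE)
        show "AE x in lborel. (\<integral>\<^sup>+y. ennreal (joint_density x y) * indicator A x \<partial>lborel) = m x * indicator A x"
          using marginal_ae
        proof (rule eventually_mono)
          fix x assume e: "(\<integral>\<^sup>+y. ennreal (joint_density x y) \<partial>lborel) = ennreal (marginal_density_a x)"
          have "(\<integral>\<^sup>+y. ennreal (joint_density x y) * indicator A x \<partial>lborel) = (\<integral>\<^sup>+y. ennreal (joint_density x y) \<partial>lborel) * indicator A x"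
            by (subst nn_integral_multc) (auto simp: joint_density_def)
          then show "(\<integral>\<^sup>+y. ennreal (joint_density x y) * indicator A x \<partial>lborel) = m x * indicator A x"
            by (simp add: e m_def)
        qed
      qed
      also have "\<dots> = emeasure (density lborel m) A"
        using A' by (subst emeasure_density) auto
      finally show "emeasure (distr (density ?L2 k) lborel fst) A = emeasure (density lborel m) A" .
    qed
    finally show ?thesis .
  qed
  have Ameas: "(\<lambda>\<omega>. side_a (\<phi> \<omega>) (\<psi> \<omega>)) \<in> M \<rightarrow>\<^sub>M lborel"
    unfolding Am by (rule measurable_comp[OF Xmeas fm])
  have part2: "distributed M lborel (\<lambda>\<omega>. side_a (\<phi> \<omega>) (\<psi> \<omega>)) m"
    unfolding distributed_def using dA mm Ameas by simp
  show ?thesis using part1 part2 unfolding k_def m_def by simp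
qed


end
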